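(* Let $\lambda>0$ and $d\ge3$. Then the function $C_\lambda(u_1,\dots,u_d)=\phi_\lambda^{[-1]}(\phi_\lambda(u_1)+\cdots+\phi_\lambda(u_d))$, $u_1,\dots,u_d\in[0,1]$, is not a $d$-dimensional copula.
   Context: For $\lambda\neq-1,0$, $\phi_\lambda(x)=\frac{1}{\lambda(\lambda+1)}(x^{\lambda+1}-x+\lambda(1-x))$ for $x\ge0$; for $\lambda>0$, $\phi_\lambda(0)=1/(\lambda+1)$ and $\phi_\lambda$ is convex and strictly decreasing on $[0,1]$ with $\phi_\lambda(1)=0$. The pseudoinverse is $\phi_\lambda^{[-1]}(t)=\phi_\lambda^{-1}(t)$ (inverse of $\phi_\lambda|_{[0,1]}$) for $0\le t<\phi_\lambda(0)$ and $\phi_\lambda^{[-1]}(t)=0$ for $t\ge\phi_\lambda(0)$. A $d$-dimensional copula is a joint CDF on $[0,1]^d$ with uniform $[0,1]$ margins. *)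

theory Defs
  imports "HOL-Probability.Probability"
begin

definition phi :: "real \<Rightarrow> real \<Rightarrow> real" where
  "phi lam x = (x powr (lam + 1) - x + lam * (1 - x)) / (lam * (lam + 1))"

definition phi_pinv :: "real \<Rightarrow> real \<Rightarrow> real" where
  "phi_pinv lam t = (if t < phi lam 0 then (THE x. x \<in> {0..1} \<and> phi lam x = t) else 0)"

definition C_lam :: "real \<Rightarrow> nat \<Rightarrow> (nat \<Rightarrow> real) \<Rightarrow> real" where
  "C_lam lam d u = phi_pinv lam (\<Sum>i<d. phi lam (u i))"

definition copula :: "nat \<Rightarrow> ((nat \<Rightarrow> real) \<Rightarrow> real) \<Rightarrow> bool" where
  "copula d C \<longleftrightarrow> (\<exists>M. prob_space M \<and>
      sets M = sets (PiM {..<d} (\<lambda>_. (borel :: real measure))) \<and>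
      (\<forall>i<d. \<forall>t\<in>{0..1}. measure M {x \<in> space M. x i \<le> t} = t) \<and>
      (\<forall>u \<in> PiE {..<d} (\<lambda>_. {0..1}). C u = measure M {x \<in> space M. \<forall>i<d. x i \<le> u i}))"

end

theory Submission imports Defs begin

lemma pow_ineq:
  fixes lam x z :: real
  assumes "lam > 0" "0 \<le> x" "x < z" "z \<le> 1"
  shows "z powr (lam+1) - x powr (lam+1) < (lam+1)*(z-x)"
proof -
  have cont: "continuous_on {x..z} (\<lambda>t. t powr (lam+1))"
    by (rule continuous_on_powr') (use assms in \<open>auto intro: continuous_intros\<close>)
  have diff: "\<And>t. x < t \<Longrightarrow> t < z \<Longrightarrow> (\<lambda>t. t powr (lam+1)) differentiable (at t)"
    using assms has_real_derivative_powr real_differentiable_def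
    by (metis le_less_trans)
  obtain l w where w: "x < w" "w < z" and D: "((\<lambda>t. t powr (lam+1)) has_real_derivative l) (at w)"
    and eq: "z powr (lam+1) - x powr (lam+1) = (z - x) * l"
    using MVT[OF assms(3) cont diff] by blast
  have "((\<lambda>t. t powr (lam+1)) has_real_derivative (lam+1) * w powr (lam+1-1)) (at w)"
    using w assms by (intro has_real_derivative_powr) auto
  hence l: "l = (lam+1) * w powr lam" using DERIV_unique[OF D] by simp
  have "w powr lam < 1 powr lam"
    using w assms by (intro powr_less_mono2) auto
  hence "w powr lam < 1" by simp
  thus ?thesis unfolding eq l using assms
    by (simp add: mult_strict_left_mono)
qed

lemma phi_strict:
  fixes lam x z :: real
  assumes "lam > 0" "0 \<le> x" "x < z" "z \<le> 1"
  shows "phi lam z < phi lam x"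
proof -
  have "z powr (lam+1) - z + lam*(1-z) < x powr (lam+1) - x + lam*(1-x)"
    using pow_ineq[OF assms] by (simp add: algebra_simps)
  thus ?thesis unfolding phi_def using assms
    by (intro divide_strict_right_mono) auto
qed

lemma phi_mono:
  fixes lam x z :: real
  assumes "lam > 0" "0 \<le> x" "x \<le> z" "z \<le> 1"
  shows "phi lam z \<le> phi lam x"
  using phi_strict[OF assms(1,2) _ assms(4)] assms(3) by (cases "x = z") auto

lemma phi_inj:
  fixes lam x z :: real
  assumes "lam > 0" "0 \<le> x" "x \<le> 1" "0 \<le> z" "z \<le> 1" "phi lam x = phi lam z"
  shows "x = z"
  using phi_strict[of lam x z] phi_strict[of lam z x] assms by (cases x z rule: linorder_cases) auto

lemma phi_0: "lam > 0 \<Longrightarrow> phi lam 0 = 1/(lam+1)"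
  unfolding phi_def using add_pos_pos[of lam "lam*lam"] by (simp add: field_simps)

lemma phi_1: "phi lam 1 = 0"
  unfolding phi_def by simp

lemma phi_cont: "lam > 0 \<Longrightarrow> continuous_on {0..1} (phi lam)"
  unfolding phi_def
  by (intro continuous_intros continuous_on_powr') auto

lemma phi_surj:
  fixes lam s :: real
  assumes "lam > 0" "0 \<le> s" "s \<le> phi lam 0"
  shows "\<exists>x. 0 \<le> x \<and> x \<le> 1 \<and> phi lam x = s"
  using IVT2'[of "phi lam" 1 s 0] phi_cont[OF assms(1)] phi_1[of lam] assms by auto

lemma pinv_eq:
  fixes lam x :: real
  assumes "lam > 0" "0 \<le> x" "x \<le> 1" "phi lam x < phi lam 0"
  shows "phi_pinv lam (phi lam x) = x"
  unfolding phi_pinv_def using assms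
  by (auto intro!: the_equality phi_inj[of lam])

lemma sum3:
  fixes g :: "nat \<Rightarrow> real"
  assumes "3 \<le> d" "\<And>i. 3 \<le> i \<Longrightarrow> i < d \<Longrightarrow> g i = 0"
  shows "(\<Sum>i<d. g i) = g 0 + g 1 + g 2"
proof -
  have "(\<Sum>i<d. g i) = (\<Sum>i<3. g i)"
    by (rule sum.mono_neutral_right) (use assms in auto)
  also have "\<dots> = g 0 + g 1 + g 2" by (simp add: eval_nat_numeral)
  finally show ?thesis .
qed

theorem theorem5:
  fixes lam :: real and d :: nat
  assumes "lam > 0" and "d \<ge> 3"
  shows "\<not> copula d (C_lam lam d)"
proof
  assume cop: "copula d (C_lam lam d)"
  have lp: "lam > 0" by fact
  define t0 where "t0 = phi lam 0"
  define y where "y = (3::real) powr (-(lam+1)/lam)"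
  have y0: "0 < y" unfolding y_def by simp
  have "y < 3 powr (-1)" unfolding y_def using lp
    by (subst powr_less_cancel_iff) (auto simp: field_simps)
  hence y3: "3*y < 1" by (simp add: powr_minus)
  have ypl: "y powr lam = 3 powr (-(lam+1))"
    unfolding y_def powr_powr using lp by simp
  have e1: "y powr (lam+1) = y * y powr lam" using y0 by (simp add: powr_add)
  have e2: "(3*y) powr (lam+1) = 3 powr (lam+1) * y powr (lam+1)"
    using y0 by (simp add: powr_mult)
  have e3: "(3::real) powr (lam+1) * 3 powr (-(lam+1)) = 1"
    by (subst powr_add[symmetric]) simp
  have e4: "(3*y) powr (lam+1) = y" unfolding e2 e1 ypl using e3
    by (metis mult.assoc mult.commute mult_1)
  have key0: "(3*y) powr (lam+1) - 2 * y powr (lam+1) - (lam+1)*y < 0"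
  proof -
    have "y powr (lam+1) > 0" using y0 by simp
    moreover have "lam*y > 0" using y0 lp by simp
    moreover have "(lam+1)*y = lam*y + y" by (simp add: algebra_simps)
    ultimately show ?thesis unfolding e4 by linarith
  qed
  have key: "phi lam (3*y) < 2 * phi lam y - t0"
  proof -
    have "phi lam (3*y) - (2 * phi lam y - t0)
       = ((3*y) powr (lam+1) - 2 * y powr (lam+1) - (lam+1)*y) / (lam*(lam+1))"
      proof -
      have g: "\<And>A B C D::real. A/D - (2*(B/D) - C/D) = (A - 2*B + C)/D"
        by (simp add: diff_divide_distrib add_divide_distrib)
      show ?thesis unfolding t0_def phi_def g by (simp add: algebra_simps)
    qed
    also have "\<dots> < 0" using key0 lp by (intro divide_neg_pos) auto
    finally show ?thesis by simp
  qed
  have phy_lt: "phi lam y < t0" unfolding t0_def using phi_strict[of lam 0 y] y0 y3 lp by simp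
  have phy_ge: "0 \<le> phi lam y" using phi_mono[of lam y 1] phi_1[of lam] y0 y3 lp by simp
  have ph3y: "0 \<le> phi lam (3*y)" using phi_mono[of lam "3*y" 1] phi_1[of lam] y0 y3 lp by simp
  define al where "al = (2*t0 - phi lam y)/3"
  define be where "be = (2*phi lam y - t0)/3"
  obtain a where a: "0 \<le> a" "a \<le> 1" "phi lam a = al"
    using phi_surj[of lam al] lp phy_lt phy_ge unfolding al_def t0_def by auto
  obtain b where b: "0 \<le> b" "b \<le> 1" "phi lam b = be"
    using phi_surj[of lam be] lp phy_lt phy_ge key ph3y unfolding be_def t0_def by auto
  obtain p where p: "0 \<le> p" "p \<le> 1" "phi lam p = 3*be"
    using phi_surj[of lam "3*be"] lp phy_lt phy_ge key ph3y unfolding be_def t0_def by auto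
  have ab: "a \<le> b"
  proof (rule ccontr)
    assume "\<not> a \<le> b"
    hence "phi lam a < phi lam b" using phi_strict[of lam b a] a b lp by auto
    thus False using a b phy_lt unfolding al_def be_def by auto
  qed
  have p3: "p < 3*y"
  proof (rule ccontr)
    assume "\<not> p < 3*y"
    hence "phi lam p \<le> phi lam (3*y)" using phi_mono[of lam "3*y" p] p y0 lp by auto
    thus False using p key unfolding be_def by auto
  qed
  from cop obtain M where M: "prob_space M"
    and sM: "sets M = sets (PiM {..<d} (\<lambda>_. (borel :: real measure)))"
    and CM: "\<forall>u \<in> PiE {..<d} (\<lambda>_. {0..1}). C_lam lam d u = measure M {x \<in> space M. \<forall>i<d. x i \<le> u i}"
    unfolding copula_def by blast
  have fin: "finite_measure M" using M by (rule prob_space.finite_measure)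
  define U where "U = (\<lambda>c0 c1 c2 (i::nat). if i < d then (if i = 0 then c0 else if i = 1 then c1 else if i = 2 then c2 else (1::real)) else undefined)"
  define G where "G = (\<lambda>c0 c1 c2. {x \<in> space M. \<forall>i<d. x i \<le> U c0 c1 c2 i})"
  have spM: "space M = space (PiM {..<d} (\<lambda>_. (borel :: real measure)))"
    using sM by (rule sets_eq_imp_space_eq)
  have Gs: "G c0 c1 c2 \<in> sets M" for c0 c1 c2
  proof -
    have "{x \<in> space (PiM {..<d} (\<lambda>_. (borel :: real measure))). \<forall>i\<in>{..<d}. x i \<le> U c0 c1 c2 i}
       \<in> sets (PiM {..<d} (\<lambda>_. (borel :: real measure)))"
      by measurable
    thus ?thesis unfolding G_def spM sM by simp
  qed
  have GC: "measure M (G c0 c1 c2) = phi_pinv lam (phi lam c0 + phi lam c1 + phi lam c2)"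
    if "c0 \<in> {0..1}" "c1 \<in> {0..1}" "c2 \<in> {0..1}" for c0 c1 c2
  proof -
    have "U c0 c1 c2 \<in> PiE {..<d} (\<lambda>_. {0..1})" using that unfolding U_def PiE_def Pi_def extensional_def by simp
    hence "measure M (G c0 c1 c2) = C_lam lam d (U c0 c1 c2)" using CM unfolding G_def by auto
    also have "\<dots> = phi_pinv lam (phi lam c0 + phi lam c1 + phi lam c2)"
      unfolding C_lam_def
      by (subst sum3) (use assms(2) in \<open>auto simp: U_def phi_1\<close>)
    finally show ?thesis .
  qed
  have ain: "a \<in> {0..1}" and bin: "b \<in> {0..1}" using a b by auto
  have s1: "phi lam b + phi lam b + phi lam b = phi lam p" using b p by simp
  have s2: "phi lam p < phi lam 0" using p phy_lt unfolding be_def t0_def by simp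
  have mE: "measure M (G b b b) = p"
    using GC[OF bin bin bin] unfolding s1 using pinv_eq[of lam p] lp p s2 by simp
  have s3: "phi lam a + phi lam b + phi lam b = phi lam y"
    "phi lam b + phi lam a + phi lam b = phi lam y"
    "phi lam b + phi lam b + phi lam a = phi lam y"
    using a b unfolding al_def be_def by (simp_all add: field_simps)
  have py: "phi_pinv lam (phi lam y) = y"
    using pinv_eq[of lam y] lp y0 y3 phy_lt unfolding t0_def by simp
  have mEi: "measure M (G a b b) = y" "measure M (G b a b) = y" "measure M (G b b a) = y"
    using GC[OF ain bin bin] GC[OF bin ain bin] GC[OF bin bin ain] unfolding s3 py by simp_all
  have zz: "2*al + be = phi lam 0" unfolding al_def be_def t0_def by (simp add: field_simps)
  have z: "phi_pinv lam (2*al + be) = 0"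
    unfolding zz phi_pinv_def by simp
  have mEij: "measure M (G a a b) = 0" "measure M (G a b a) = 0" "measure M (G b a a) = 0"
    using GC[OF ain ain bin] GC[OF ain bin ain] GC[OF bin ain ain] a b z
    by (auto simp: algebra_simps)
  have Galt: "G c0 c1 c2 = {x \<in> space M. x 0 \<le> c0 \<and> x 1 \<le> c1 \<and> x 2 \<le> c2 \<and> (\<forall>i. 3 \<le> i \<and> i < d \<longrightarrow> x i \<le> 1)}" for c0 c1 c2
  proof -
    have "(\<forall>i<d. x i \<le> U c0 c1 c2 i) \<longleftrightarrow> (x 0 \<le> c0 \<and> x 1 \<le> c1 \<and> x 2 \<le> c2 \<and> (\<forall>i. 3 \<le> i \<and> i < d \<longrightarrow> x i \<le> 1))" for x :: "nat \<Rightarrow> real"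
    proof
      assume h: "\<forall>i<d. x i \<le> U c0 c1 c2 i"
      have "x 0 \<le> c0" using h[rule_format, of 0] assms(2) unfolding U_def by simp
      moreover have "x 1 \<le> c1" using h[rule_format, of 1] assms(2) unfolding U_def by simp
      moreover have "x 2 \<le> c2" using h[rule_format, of 2] assms(2) unfolding U_def by simp
      moreover have "\<forall>i. 3 \<le> i \<and> i < d \<longrightarrow> x i \<le> 1"
      proof (intro allI impI)
        fix i assume "3 \<le> i \<and> i < d"
        thus "x i \<le> 1" using h[rule_format, of i] unfolding U_def by simp
      qed
      ultimately show "x 0 \<le> c0 \<and> x 1 \<le> c1 \<and> x 2 \<le> c2 \<and> (\<forall>i. 3 \<le> i \<and> i < d \<longrightarrow> x i \<le> 1)" by blast
    next
      assume h: "x 0 \<le> c0 \<and> x 1 \<le> c1 \<and> x 2 \<le> c2 \<and> (\<forall>i. 3 \<le> i \<and> i < d \<longrightarrow> x i \<le> 1)"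
      show "\<forall>i<d. x i \<le> U c0 c1 c2 i"
      proof (intro allI impI)
        fix i assume i: "i < d"
        consider "i = 0" | "i = 1" | "i = 2" | "3 \<le> i" by linarith
        thus "x i \<le> U c0 c1 c2 i" using h i unfolding U_def by cases auto
      qed
    qed
    thus ?thesis unfolding G_def by blast
  qed
  have I1: "G a b b \<inter> G b a b = G a a b" "G a b b \<inter> G b b a = G a b a" "G b a b \<inter> G b b a = G b a a"
    unfolding Galt using ab by auto
  have sub: "G a b b \<union> G b a b \<union> G b b a \<subseteq> G b b b"
    unfolding Galt using ab by auto
  have fm: "G c0 c1 c2 \<in> fmeasurable M" for c0 c1 c2 using Gs finite_measure.fmeasurable_eq_sets[OF fin] by auto
  have u1: "measure M (G a b b \<union> G b a b) = 2*y"
    using measure_Un3[OF fm fm] I1 mEi mEij by simp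
  have int: "(G a b b \<union> G b a b) \<inter> G b b a = G a b a \<union> G b a a" using I1 by auto
  have "measure M (G a b a \<union> G b a a) \<le> 0"
    using measure_Un3[OF fm fm, of a b a b a a] mEij measure_nonneg[of M] by simp
  hence mi: "measure M ((G a b b \<union> G b a b) \<inter> G b b a) = 0"
    unfolding int using measure_nonneg[of M] by (simp add: order_antisym)
  have "measure M (G a b b \<union> G b a b \<union> G b b a) = 3*y"
    using measure_Un3[of "G a b b \<union> G b a b" M "G b b a"] fm u1 mi mEi
    by (simp add: fmeasurable.Un)
  moreover have "measure M (G a b b \<union> G b a b \<union> G b b a) \<le> measure M (G b b b)"
    using sub Gs by (intro finite_measure.finite_measure_mono[OF fin]) auto
  ultimately show False using mE p3 by simp
qed

thm_deps theorem5

end
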